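(* Let $X=Y=\mathbb Z$ with $d(n,m)=|n-m|$, and let $f_1=\mathrm{id}_{\mathbb Z}$, $f_2(n)=-n$. Then there is no metric $d\in D(\mathbb Z,\mathbb Z)$ with $M_{d_{f_1}}(\mathbb Z,\mathbb Z)\subset M_d(\mathbb Z,\mathbb Z)$ and $M_{d_{f_2}}(\mathbb Z,\mathbb Z)\subset M_d(\mathbb Z,\mathbb Z)$; in particular the preorder $\preceq$ on $D(\mathbb Z,\mathbb Z)$ is not upwards directed.
   Context: $D(X,Y)$: metrics on $X\sqcup Y$ extending $d_X,d_Y$. $M_d(X,Y)$: norm closure of bounded operators $T:l^2(X)\to l^2(Y)$ with finite propagation (there is $L$ with $\langle T\delta_x,\delta_y\rangle=0$ whenever $d(x,y)\ge L$). $d\preceq d'$ means $M_d\subset M_{d'}$. For an almost isometry $f:X\to Y$ (i.e. $d_X(x,x')-C\le d_Y(f(x),f(x'))\le d_X(x,x')+C$ for some $C>0$), $d_f$ is the metric extending $d_X,d_Y$ with $d_f(x,y)=\inf_{\tilde x\in X}(d_X(x,\tilde x)+C/2+d_Y(f(\tilde x),y))$. *)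

theory Defs
  imports "HOL-Analysis.Analysis"
begin

definition L2 :: "(int \<Rightarrow> complex) set" where
  "L2 = {f. (\<lambda>x. (cmod (f x))\<^sup>2) summable_on UNIV}"

definition l2norm :: "(int \<Rightarrow> complex) \<Rightarrow> real" where
  "l2norm f = sqrt (infsum (\<lambda>x. (cmod (f x))\<^sup>2) UNIV)"

text \<open>Bounded (linear) operators l^2(Z) -> l^2(Z); only the values on L2 matter.\<close>

definition bounded_op :: "((int \<Rightarrow> complex) \<Rightarrow> (int \<Rightarrow> complex)) \<Rightarrow> bool" where
  "bounded_op T \<longleftrightarrow>
     (\<forall>f\<in>L2. T f \<in> L2) \<and>
     (\<forall>f\<in>L2. \<forall>g\<in>L2. T (\<lambda>x. f x + g x) = (\<lambda>y. T f y + T g y)) \<and>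
     (\<forall>c. \<forall>f\<in>L2. T (\<lambda>x. c * f x) = (\<lambda>y. c * T f y)) \<and>
     (\<exists>K. \<forall>f\<in>L2. l2norm (T f) \<le> K * l2norm f)"

definition op_dist :: "((int \<Rightarrow> complex) \<Rightarrow> (int \<Rightarrow> complex)) \<Rightarrow>
    ((int \<Rightarrow> complex) \<Rightarrow> (int \<Rightarrow> complex)) \<Rightarrow> real" where
  "op_dist S T = (SUP f\<in>{f\<in>L2. l2norm f \<le> 1}. l2norm (\<lambda>y. S f y - T f y))"

definition delta :: "int \<Rightarrow> int \<Rightarrow> complex" where
  "delta x = (\<lambda>y. if y = x then 1 else 0)"

text \<open>Metrics on X \<squnion> Y = Z \<squnion> Z (Inl = copy X, Inr = copy Y).\<close>

type_synonym zmetric = "int + int \<Rightarrow> int + int \<Rightarrow> real"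

text \<open>Finite propagation of T : l^2(X) -> l^2(Y) w.r.t. d: <T delta_x, delta_y> = (T delta_x) y.\<close>

definition finite_prop :: "zmetric \<Rightarrow> ((int \<Rightarrow> complex) \<Rightarrow> (int \<Rightarrow> complex)) \<Rightarrow> bool" where
  "finite_prop d T \<longleftrightarrow> (\<exists>L. \<forall>x y. d (Inl x) (Inr y) \<ge> L \<longrightarrow> T (delta x) y = 0)"

text \<open>M_d(Z,Z): norm closure of the bounded finite-propagation operators.\<close>

definition Mop :: "zmetric \<Rightarrow> ((int \<Rightarrow> complex) \<Rightarrow> (int \<Rightarrow> complex)) set" where
  "Mop d = {T. bounded_op T \<and>
     (\<forall>\<epsilon>>0. \<exists>S. bounded_op S \<and> finite_prop d S \<and> op_dist T S < \<epsilon>)}"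

definition Dmet :: "zmetric set" where
  "Dmet = {d. (\<forall>p q. d p q \<ge> 0) \<and> (\<forall>p q. d p q = 0 \<longleftrightarrow> p = q) \<and>
              (\<forall>p q. d p q = d q p) \<and> (\<forall>p q r. d p r \<le> d p q + d q r) \<and>
              (\<forall>a b. d (Inl a) (Inl b) = real_of_int \<bar>a - b\<bar>) \<and>
              (\<forall>a b. d (Inr a) (Inr b) = real_of_int \<bar>a - b\<bar>)}"

definition preceq :: "zmetric \<Rightarrow> zmetric \<Rightarrow> bool" where
  "preceq d d' \<longleftrightarrow> Mop d \<subseteq> Mop d'"

text \<open>The metric d_f for an almost isometry f : Z -> Z with constant C.\<close>

definition dmix :: "(int \<Rightarrow> int) \<Rightarrow> real \<Rightarrow> int \<Rightarrow> int \<Rightarrow> real" where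
  "dmix f C x y = (INF t. real_of_int \<bar>x - t\<bar> + C / 2 + real_of_int \<bar>f t - y\<bar>)"

definition d_f :: "(int \<Rightarrow> int) \<Rightarrow> real \<Rightarrow> zmetric" where
  "d_f f C p q = (case p of
       Inl a \<Rightarrow> (case q of Inl b \<Rightarrow> real_of_int \<bar>a - b\<bar> | Inr y \<Rightarrow> dmix f C a y)
     | Inr a \<Rightarrow> (case q of Inl x \<Rightarrow> dmix f C x a | Inr b \<Rightarrow> real_of_int \<bar>a - b\<bar>))"

end

theory Submission
  imports "HOL-Analysis.Analysis" Defs
begin

lemma pt_ineq: "(cmod (a - b))\<^sup>2 \<le> 2 * (cmod a)\<^sup>2 + 2 * (cmod b)\<^sup>2"
proof -
  have "cmod (a - b) \<le> cmod a + cmod b" by (rule norm_triangle_ineq4)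
  hence "(cmod (a - b))\<^sup>2 \<le> (cmod a + cmod b)\<^sup>2"
    by (simp add: power_mono)
  also have "\<dots> \<le> 2 * (cmod a)\<^sup>2 + 2 * (cmod b)\<^sup>2"
    using sum_squares_ge_zero[of "cmod a - cmod b" 0] by (simp add: power2_eq_square algebra_simps)
  finally show ?thesis .
qed

lemma L2_diff:
  assumes "f \<in> L2" "g \<in> L2"
  shows "(\<lambda>y. f y - g y) \<in> L2"
    "(l2norm (\<lambda>y. f y - g y))\<^sup>2 \<le> 2 * (l2norm f)\<^sup>2 + 2 * (l2norm g)\<^sup>2"
proof -
  let ?F = "\<lambda>x. (cmod (f x))\<^sup>2" and ?G = "\<lambda>x. (cmod (g x))\<^sup>2"
  have sf: "?F summable_on UNIV" and sg: "?G summable_on UNIV" using assms by (auto simp: L2_def)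
  have s2: "(\<lambda>x. 2 * ?F x + 2 * ?G x) summable_on UNIV"
    by (intro summable_on_add summable_on_cmult_right sf sg)
  have sd: "(\<lambda>x. (cmod (f x - g x))\<^sup>2) summable_on UNIV"
    by (rule summable_on_comparison_test[OF s2]) (auto simp: pt_ineq)
  thus "(\<lambda>y. f y - g y) \<in> L2" by (simp add: L2_def)
  have "infsum (\<lambda>x. (cmod (f x - g x))\<^sup>2) UNIV \<le> infsum (\<lambda>x. 2 * ?F x + 2 * ?G x) UNIV"
    by (rule infsum_mono[OF sd s2]) (simp add: pt_ineq)
  also have "\<dots> = 2 * infsum ?F UNIV + 2 * infsum ?G UNIV"
    by (simp add: infsum_add summable_on_cmult_right sf sg infsum_cmult_right)
  finally have le: "infsum (\<lambda>x. (cmod (f x - g x))\<^sup>2) UNIV \<le> 2 * infsum ?F UNIV + 2 * infsum ?G UNIV" .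
  have n1: "infsum ?F UNIV \<ge> 0" "infsum ?G UNIV \<ge> 0" "infsum (\<lambda>x. (cmod (f x - g x))\<^sup>2) UNIV \<ge> 0"
    by (auto intro: infsum_nonneg)
  show "(l2norm (\<lambda>y. f y - g y))\<^sup>2 \<le> 2 * (l2norm f)\<^sup>2 + 2 * (l2norm g)\<^sup>2"
    using le n1 by (simp add: l2norm_def)
qed

lemma L2_point:
  assumes "g \<in> L2"
  shows "cmod (g y) \<le> l2norm g"
proof -
  have s: "(\<lambda>x. (cmod (g x))\<^sup>2) summable_on UNIV" using assms by (simp add: L2_def)
  have "infsum (\<lambda>x. (cmod (g x))\<^sup>2) {y} \<le> infsum (\<lambda>x. (cmod (g x))\<^sup>2) UNIV"
    by (rule infsum_mono_neutral[OF _ s]) auto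
  hence "(cmod (g y))\<^sup>2 \<le> infsum (\<lambda>x. (cmod (g x))\<^sup>2) UNIV" by simp
  hence "sqrt ((cmod (g y))\<^sup>2) \<le> l2norm g" unfolding l2norm_def by (rule real_sqrt_le_mono)
  thus ?thesis by simp
qed

lemma delta_L2: "delta x \<in> L2" "l2norm (delta x) = 1"
proof -
  have "(\<lambda>y. (cmod (delta x y))\<^sup>2) summable_on {x}" by simp
  moreover have "((\<lambda>y. (cmod (delta x y))\<^sup>2) summable_on {x}) = ((\<lambda>y. (cmod (delta x y))\<^sup>2) summable_on UNIV)"
    by (rule summable_on_cong_neutral) (auto simp: delta_def)
  ultimately have "(\<lambda>y. (cmod (delta x y))\<^sup>2) summable_on UNIV" by simp
  thus "delta x \<in> L2" by (simp add: L2_def)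
  have "infsum (\<lambda>y. (cmod (delta x y))\<^sup>2) UNIV = infsum (\<lambda>y. (cmod (delta x y))\<^sup>2) {x}"
    by (rule infsum_cong_neutral) (auto simp: delta_def)
  thus "l2norm (delta x) = 1" by (simp add: l2norm_def delta_def)
qed


lemma l2norm_nonneg: "l2norm f \<ge> 0"
  unfolding l2norm_def by (auto intro: infsum_nonneg)

lemma bounded_op_bound:
  assumes "bounded_op T"
  shows "\<exists>B. \<forall>f\<in>L2. l2norm f \<le> 1 \<longrightarrow> l2norm (T f) \<le> B"
proof -
  obtain K where K: "\<forall>f\<in>L2. l2norm (T f) \<le> K * l2norm f" using assms by (auto simp: bounded_op_def)
  have "l2norm (T f) \<le> \<bar>K\<bar>" if "f \<in> L2" "l2norm f \<le> 1" for f
  proof -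
    have "l2norm (T f) \<le> K * l2norm f" using K that by auto
    also have "\<dots> \<le> \<bar>K\<bar> * l2norm f" using l2norm_nonneg[of f]
      by (simp add: mult_right_mono)
    also have "\<dots> \<le> \<bar>K\<bar>" using that(2) l2norm_nonneg[of f]
      by (simp add: mult_left_le)
    finally show ?thesis .
  qed
  thus ?thesis by blast
qed

lemma op_bound:
  assumes T: "bounded_op T" and S: "bounded_op S" and f: "f \<in> L2" "l2norm f \<le> 1"
  shows "cmod (T f y - S f y) \<le> op_dist T S"
proof -
  obtain B1 where B1: "\<forall>f\<in>L2. l2norm f \<le> 1 \<longrightarrow> l2norm (T f) \<le> B1" using bounded_op_bound[OF T] by blast
  obtain B2 where B2: "\<forall>f\<in>L2. l2norm f \<le> 1 \<longrightarrow> l2norm (S f) \<le> B2" using bounded_op_bound[OF S] by blast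
  have TL: "\<And>g. g \<in> L2 \<Longrightarrow> T g \<in> L2" and SL: "\<And>g. g \<in> L2 \<Longrightarrow> S g \<in> L2"
    using T S by (auto simp: bounded_op_def)
  have bd: "l2norm (\<lambda>y. T g y - S g y) \<le> sqrt (2 * B1\<^sup>2 + 2 * B2\<^sup>2)"
    if "g \<in> L2" "l2norm g \<le> 1" for g
  proof -
    have a: "(l2norm (\<lambda>y. T g y - S g y))\<^sup>2 \<le> 2 * (l2norm (T g))\<^sup>2 + 2 * (l2norm (S g))\<^sup>2"
      using L2_diff(2)[OF TL SL] that by blast
    have "(l2norm (T g))\<^sup>2 \<le> B1\<^sup>2"
      using B1 that l2norm_nonneg[of "T g"] by (auto intro: power_mono)
    moreover have "(l2norm (S g))\<^sup>2 \<le> B2\<^sup>2"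
      using B2 that l2norm_nonneg[of "S g"] by (auto intro: power_mono)
    ultimately have "(l2norm (\<lambda>y. T g y - S g y))\<^sup>2 \<le> 2 * B1\<^sup>2 + 2 * B2\<^sup>2" using a by linarith
    hence "sqrt ((l2norm (\<lambda>y. T g y - S g y))\<^sup>2) \<le> sqrt (2 * B1\<^sup>2 + 2 * B2\<^sup>2)"
      by (rule real_sqrt_le_mono)
    thus ?thesis using l2norm_nonneg by simp
  qed
  have bdd: "bdd_above ((\<lambda>f. l2norm (\<lambda>y. T f y - S f y)) ` {f\<in>L2. l2norm f \<le> 1})"
    using bd by (intro bdd_aboveI2[where M="sqrt (2 * B1\<^sup>2 + 2 * B2\<^sup>2)"]) auto
  have "cmod (T f y - S f y) \<le> l2norm (\<lambda>y. T f y - S f y)"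
    using L2_point[OF L2_diff(1)[OF TL[OF f(1)] SL[OF f(1)]]] .
  also have "\<dots> \<le> op_dist T S" unfolding op_dist_def
    by (rule cSUP_upper[OF _ bdd]) (use f in auto)
  finally show ?thesis .
qed

lemma near:
  assumes "T \<in> Mop d" and h: "\<And>x. T (delta x) (h x) = 1"
  shows "\<exists>L. \<forall>x. d (Inl x) (Inr (h x)) < L"
proof -
  have T: "bounded_op T" using assms by (simp add: Mop_def)
  obtain S where S: "bounded_op S" "finite_prop d S" "op_dist T S < 1/2"
    using assms(1) unfolding Mop_def by (auto dest!: spec[of _ "1/2"])
  obtain L where L: "\<forall>x y. d (Inl x) (Inr y) \<ge> L \<longrightarrow> S (delta x) y = 0"
    using S(2) by (auto simp: finite_prop_def)
  have "d (Inl x) (Inr (h x)) < L" for x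
  proof (rule ccontr)
    assume "\<not> d (Inl x) (Inr (h x)) < L"
    hence "S (delta x) (h x) = 0" using L by auto
    hence "cmod (T (delta x) (h x) - S (delta x) (h x)) = 1" using h by simp
    moreover have "cmod (T (delta x) (h x) - S (delta x) (h x)) \<le> op_dist T S"
      by (rule op_bound[OF T S(1) delta_L2(1)]) (simp add: delta_L2(2))
    ultimately show False using S(3) by simp
  qed
  thus ?thesis by blast
qed

definition Ident :: "(int \<Rightarrow> complex) \<Rightarrow> (int \<Rightarrow> complex)" where "Ident f = f"
definition Flip :: "(int \<Rightarrow> complex) \<Rightarrow> (int \<Rightarrow> complex)" where "Flip f = (\<lambda>y. f (- y))"

lemma no_common:
  assumes d: "d \<in> Dmet" and I: "Ident \<in> Mop d" and F: "Flip \<in> Mop d"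
  shows False
proof -
  obtain L1 where L1: "\<forall>x. d (Inl x) (Inr x) < L1"
    using near[OF I, of "\<lambda>x. x"] by (auto simp: Ident_def delta_def)
  obtain L2 where L2: "\<forall>x. d (Inl x) (Inr (- x)) < L2"
    using near[OF F, of "\<lambda>x. - x"] by (auto simp: Flip_def delta_def)
  define x :: int where "x = \<lceil>\<bar>L1\<bar> + \<bar>L2\<bar>\<rceil> + 1"
  have x0: "x \<ge> 0" unfolding x_def using ceiling_mono[of 0 "\<bar>L1\<bar> + \<bar>L2\<bar>"] by simp
  have tri: "\<forall>p q r. d p r \<le> d p q + d q r" and sym: "\<forall>p q. d p q = d q p"
    using d by (auto simp: Dmet_def)
  have "d (Inr x) (Inr (- x)) \<le> d (Inr x) (Inl x) + d (Inl x) (Inr (- x))"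
    using tri by blast
  also have "\<dots> = d (Inl x) (Inr x) + d (Inl x) (Inr (- x))"
    using sym by metis
  also have "\<dots> < L1 + L2" using L1 L2 by (meson add_strict_mono)
  finally have "d (Inr x) (Inr (- x)) < L1 + L2" .
  moreover have "d (Inr x) (Inr (- x)) = real_of_int \<bar>x - - x\<bar>" using d by (auto simp: Dmet_def)
  moreover have "real_of_int \<bar>x - - x\<bar> \<ge> L1 + L2"
  proof -
    have "real_of_int x \<ge> \<bar>L1\<bar> + \<bar>L2\<bar>" unfolding x_def
      by (smt (verit) le_of_int_ceiling of_int_add of_int_1)
    thus ?thesis using x0 by simp
  qed
  ultimately show False by simp
qed

lemma bounded_Ident: "bounded_op Ident"
  unfolding bounded_op_def Ident_def by (auto intro!: exI[of _ 1])

lemma flip_bij: "bij_betw (uminus :: int \<Rightarrow> int) UNIV UNIV"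
  by (rule bij_betwI[where g=uminus]) auto

lemma Flip_L2: "f \<in> L2 \<Longrightarrow> Flip f \<in> L2 \<and> l2norm (Flip f) = l2norm f"
  unfolding L2_def l2norm_def Flip_def
  using summable_on_reindex_bij_betw[OF flip_bij, of "\<lambda>x. (cmod (f x))\<^sup>2"]
    infsum_reindex_bij_betw[OF flip_bij, of "\<lambda>x. (cmod (f x))\<^sup>2"] by simp

lemma bounded_Flip: "bounded_op Flip"
  unfolding bounded_op_def using Flip_L2
  by (auto simp: Flip_def intro!: exI[of _ 1])

lemma op_dist_self: "op_dist T T = 0"
proof -
  have z: "l2norm (\<lambda>y. 0) = 0" by (simp add: l2norm_def)
  have "(\<lambda>y::int. 0::complex) \<in> {f\<in>L2. l2norm f \<le> 1}" by (simp add: L2_def z)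
  hence ne: "{f\<in>L2. l2norm f \<le> 1} \<noteq> {}" by blast
  show ?thesis proof -
    have e: "(\<lambda>f. l2norm (\<lambda>y. T f y - T f y)) = (\<lambda>f. 0)" by (simp add: z)
    show ?thesis unfolding op_dist_def e by (rule cSUP_const[OF ne])
  qed
qed

lemma Mop_fp: "bounded_op T \<Longrightarrow> finite_prop d T \<Longrightarrow> T \<in> Mop d"
  unfolding Mop_def using op_dist_self by force

lemma Ident_Mop:
  assumes "\<And>x. d (Inl x) (Inr x) \<le> B"
  shows "Ident \<in> Mop d"
proof (rule Mop_fp[OF bounded_Ident])
  show "finite_prop d Ident" unfolding finite_prop_def
  proof (intro exI[of _ "B + 1"] allI impI)
    fix x y assume "B + 1 \<le> d (Inl x) (Inr y)"
    hence "y \<noteq> x" using assms[of x] by auto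
    thus "Ident (delta x) y = 0" by (simp add: Ident_def delta_def)
  qed
qed

lemma Flip_Mop:
  assumes "\<And>x. d (Inl x) (Inr (- x)) \<le> B"
  shows "Flip \<in> Mop d"
proof (rule Mop_fp[OF bounded_Flip])
  show "finite_prop d Flip" unfolding finite_prop_def
  proof (intro exI[of _ "B + 1"] allI impI)
    fix x y assume "B + 1 \<le> d (Inl x) (Inr y)"
    hence "y \<noteq> - x" using assms[of x] by auto
    hence "- y \<noteq> x" by auto
    thus "Flip (delta x) y = 0" by (simp add: Flip_def delta_def)
  qed
qed

lemma dmix_le:
  assumes "C > 0"
  shows "dmix f C x (f x) \<le> C / 2"
proof -
  have "bdd_below (range (\<lambda>t. real_of_int \<bar>x - t\<bar> + C / 2 + real_of_int \<bar>f t - f x\<bar>))"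
    by (rule bdd_belowI2[where m=0]) (use assms in auto)
  hence "dmix f C x (f x) \<le> real_of_int \<bar>x - x\<bar> + C / 2 + real_of_int \<bar>f x - f x\<bar>"
    unfolding dmix_def by (rule cINF_lower) simp
  thus ?thesis by simp
qed

definition dg :: "(int + int \<Rightarrow> real) \<Rightarrow> zmetric" where
  "dg g p q = \<bar>g p - g q\<bar> + (if isl p = isl q then 0 else 1)"

lemma dg_Dmet:
  assumes l: "\<And>a b. \<bar>g (Inl a) - g (Inl b)\<bar> = real_of_int \<bar>a - b\<bar>"
    and r: "\<And>a b. \<bar>g (Inr a) - g (Inr b)\<bar> = real_of_int \<bar>a - b\<bar>"
  shows "dg g \<in> Dmet"
proof -
  have z: "dg g p q = 0 \<longleftrightarrow> p = q" for p q
  proof (cases p; cases q)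
    fix a b assume "p = Inl a" "q = Inl b" thus ?thesis using l[of a b] by (auto simp: dg_def)
  next
    fix a b assume "p = Inr a" "q = Inr b" thus ?thesis using r[of a b] by (auto simp: dg_def)
  next
    fix a b assume "p = Inl a" "q = Inr b" thus ?thesis by (auto simp: dg_def)
  next
    fix a b assume "p = Inr a" "q = Inl b" thus ?thesis by (auto simp: dg_def)
  qed
  have t: "dg g p r \<le> dg g p q + dg g q r" for p q r
    unfolding dg_def by (auto split: if_splits)
  show ?thesis unfolding Dmet_def using z t l r
    by (auto simp: dg_def abs_minus_commute)
qed

theorem mainTheorem18:
  fixes C :: real
  assumes "C > 0"
  shows "\<not> (\<exists>d\<in>Dmet. preceq (d_f id C) d \<and> preceq (d_f uminus C) d)
         \<and> \<not> (\<forall>d1\<in>Dmet. \<forall>d2\<in>Dmet. \<exists>d\<in>Dmet. preceq d1 d \<and> preceq d2 d)"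
proof
  have I1: "Ident \<in> Mop (d_f id C)"
    by (rule Ident_Mop[where B="C/2"]) (use dmix_le[OF assms, of id] in \<open>simp add: d_f_def\<close>)
  have F1: "Flip \<in> Mop (d_f uminus C)"
    by (rule Flip_Mop[where B="C/2"]) (use dmix_le[OF assms, of uminus] in \<open>simp add: d_f_def\<close>)
  show "\<not> (\<exists>d\<in>Dmet. preceq (d_f id C) d \<and> preceq (d_f uminus C) d)"
    using I1 F1 no_common by (auto simp: preceq_def)
next
  define g1 :: "int + int \<Rightarrow> real" where "g1 p = (case p of Inl a \<Rightarrow> of_int a | Inr a \<Rightarrow> of_int a)" for p
  define g2 :: "int + int \<Rightarrow> real" where "g2 p = (case p of Inl a \<Rightarrow> of_int a | Inr a \<Rightarrow> - of_int a)" for p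
  have D1: "dg g1 \<in> Dmet" by (rule dg_Dmet) (simp_all add: g1_def)
  have D2: "dg g2 \<in> Dmet" by (rule dg_Dmet) (simp_all add: g2_def abs_minus_commute)
  have I: "Ident \<in> Mop (dg g1)" by (rule Ident_Mop[where B=1]) (simp add: dg_def g1_def)
  have F: "Flip \<in> Mop (dg g2)" by (rule Flip_Mop[where B=1]) (simp add: dg_def g2_def)
  show "\<not> (\<forall>d1\<in>Dmet. \<forall>d2\<in>Dmet. \<exists>d\<in>Dmet. preceq d1 d \<and> preceq d2 d)"
  proof
    assume "\<forall>d1\<in>Dmet. \<forall>d2\<in>Dmet. \<exists>d\<in>Dmet. preceq d1 d \<and> preceq d2 d"
    then obtain d where "d \<in> Dmet" "preceq (dg g1) d" "preceq (dg g2) d" using D1 D2 by blast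
    thus False using I F no_common by (auto simp: preceq_def)
  qed
qed

end
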